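(* For $i=0,1,2,\dots$ let $D_i=\{(v_0,\dots,v_i)\in\mathbb{R}^{i+1}:\ 0\le v_i\le\cdots\le v_0\}$, and let $\varphi_i:D_i\to\mathbb{R}$ be functions that are positive and do not exceed $1$ on $D_i$. Suppose there exist functions $\psi_i:D_i\to\mathbb{R}$ with $$0<\psi_i(v_0,\dots,v_i)\le\varphi_i(v_0,\dots,v_i)\le 1\quad\text{on } D_i,\qquad i=0,1,2,\dots,$$ which are monotone decreasing in the set of their arguments, i.e. $v_0\le u_0,\dots,v_i\le u_i$ implies $\psi_i(v_0,\dots,v_i)\ge\psi_i(u_0,\dots,u_i)$. Let $\{V_i\}_{i=0}^\infty$ be a positive numeric sequence defined recurrently by $$V_{i+1}-V_i=-\varphi_i(V_0,\dots,V_i)\,V_i,\qquad i=0,1,2,\dots$$ Then the sequence $\{U_i\}_{i=0}^\infty$ defined by $U_0=V_0$ and $$U_{i+1}-U_i=-\psi_i(U_0,\dots,U_i)\,U_i,\qquad i=0,1,2,\dots$$ is majorizing: $V_i\le U_i$ for all $i=1,2,3,\dots$ *)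

theory Defs
  imports Complex_Main
begin

definition D :: "nat \<Rightarrow> real list set" where
  "D i = {v. length v = Suc i \<and> (\<forall>j<i. v ! Suc j \<le> v ! j) \<and> 0 \<le> v ! i}"

definition prefix_vec :: "(nat \<Rightarrow> real) \<Rightarrow> nat \<Rightarrow> real list" where
  "prefix_vec x i = map x [0..<Suc i]"

end

theory Submission
  imports Defs
begin

lemma prefix_in_D:
  assumes "\<And>j. j < i \<Longrightarrow> x (Suc j) \<le> x j" and "0 \<le> x i"
  shows "prefix_vec x i \<in> D i"
proof -
  have "\<And>j. j < i \<Longrightarrow> prefix_vec x i ! Suc j \<le> prefix_vec x i ! j"
    using assms(1) by (simp add: prefix_vec_def nth_append del: upt_Suc)
  moreover have "prefix_vec x i ! i = x i"
    by (simp add: prefix_vec_def del: upt_Suc)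
  ultimately show ?thesis using assms(2) by (simp add: D_def prefix_vec_def del: upt_Suc)
qed

lemma prefix_nth: "j \<le> i \<Longrightarrow> prefix_vec x i ! j = x j"
  by (simp add: prefix_vec_def del: upt_Suc)

theorem lemma2:
  fixes \<phi> \<psi> :: "nat \<Rightarrow> real list \<Rightarrow> real" and V U :: "nat \<Rightarrow> real"
  assumes phi_bounds: "\<And>i v. v \<in> D i \<Longrightarrow> 0 < \<phi> i v \<and> \<phi> i v \<le> 1"
    and psi_bounds: "\<And>i v. v \<in> D i \<Longrightarrow> 0 < \<psi> i v \<and> \<psi> i v \<le> \<phi> i v"
    and psi_mono: "\<And>i v u. v \<in> D i \<Longrightarrow> u \<in> D i \<Longrightarrow> (\<forall>j\<le>i. v ! j \<le> u ! j)
                      \<Longrightarrow> \<psi> i u \<le> \<psi> i v"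
    and V_pos: "\<And>i. V i > 0"
    and V_rec: "\<And>i. V (Suc i) - V i = - \<phi> i (prefix_vec V i) * V i"
    and U0: "U 0 = V 0"
    and U_rec: "\<And>i. U (Suc i) - U i = - \<psi> i (prefix_vec U i) * U i"
  shows "\<forall>i\<ge>1. V i \<le> U i"
proof -
  have Vdec: "\<forall>j<n. V (Suc j) \<le> V j" for n
  proof (induction n)
    case 0 then show ?case by simp
  next
    case (Suc n)
    have "prefix_vec V n \<in> D n"
      using Suc.IH V_pos[of n] by (intro prefix_in_D) auto
    then have "0 < \<phi> n (prefix_vec V n)" using phi_bounds by blast
    then have "0 < \<phi> n (prefix_vec V n) * V n" using V_pos[of n] by simp
    then have "V (Suc n) \<le> V n" using V_rec[of n] by linarith
    then show ?case using Suc.IH by (simp add: less_Suc_eq)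
  qed
  have VD: "prefix_vec V n \<in> D n" for n
    using Vdec[of n] V_pos[of n] by (intro prefix_in_D) auto
  have main: "(\<forall>j\<le>n. V j \<le> U j) \<and> (\<forall>j<n. U (Suc j) \<le> U j)" for n
  proof (induction n)
    case 0 then show ?case using U0 by simp
  next
    case (Suc n)
    have Un: "0 \<le> U n" using Suc.IH V_pos[of n] by (meson less_imp_le order_trans le_refl)
    have UD: "prefix_vec U n \<in> D n"
      using Suc.IH Un by (intro prefix_in_D) auto
    have le: "\<forall>j\<le>n. prefix_vec V n ! j \<le> prefix_vec U n ! j"
      using Suc.IH by (simp add: prefix_nth)
    define a where "a = \<psi> n (prefix_vec V n)"
    define b where "b = \<psi> n (prefix_vec U n)"
    define p where "p = \<phi> n (prefix_vec V n)"
    have ba: "b \<le> a" unfolding a_def b_def using psi_mono[OF VD UD le] .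
    have b0: "0 < b" unfolding b_def using psi_bounds[OF UD] by simp
    have ap: "a \<le> p" "p \<le> 1" unfolding a_def p_def using psi_bounds[OF VD] phi_bounds[OF VD] by auto
    have pb: "\<phi> n (prefix_vec U n) \<le> 1" using phi_bounds[OF UD] by simp
    have b1: "b \<le> 1" using psi_bounds[OF UD] pb unfolding b_def by simp
    have eV: "V (Suc n) = (1 - p) * V n" using V_rec[of n] unfolding p_def by (simp add: algebra_simps)
    have eU: "U (Suc n) = (1 - b) * U n" using U_rec[of n] unfolding b_def by (simp add: algebra_simps)
    have VU: "V n \<le> U n" using Suc.IH by simp
    have "(1 - p) * V n \<le> (1 - a) * V n" using ap V_pos[of n] by (intro mult_right_mono) auto
    also have "\<dots> \<le> (1 - a) * U n" using ap VU by (intro mult_left_mono) auto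
    also have "\<dots> \<le> (1 - b) * U n" using ba Un by (intro mult_right_mono) auto
    finally have s1: "V (Suc n) \<le> U (Suc n)" using eV eU by simp
    have "0 \<le> b * U n" using b0 Un by simp
    then have s2: "U (Suc n) \<le> U n" using eU by (simp add: algebra_simps)
    show ?case using Suc.IH s1 s2 by (simp add: le_Suc_eq less_Suc_eq)
  qed
  show ?thesis using main by blast
qed

end
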